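(* Let $G$ be a finite simple graph with $n$ vertices and $m$ edges. If $G$ is H--cordial, then $m-n$ is even.
   Context: A labeling of a graph $G$ is a map $f:E(G)\to\{-1,+1\}$. Given a labeling $f$, for each vertex $v$ define $f(v)=\sum_{e\in I(v)} f(e)$, where $I(v)$ is the set of edges incident to $v$. For an integer $c$, $e_f(c)$ denotes the number of edges $e$ with $f(e)=c$, and $v_f(c)$ denotes the number of vertices $v$ with $f(v)=c$. A labeling $f$ is H--cordial if there is a positive constant $K$ such that $|f(v)|=K$ for every vertex $v$, and $|e_f(1)-e_f(-1)|\le 1$ and $|v_f(K)-v_f(-K)|\le 1$. A graph is H--cordial if it admits an H--cordial labeling. *)

theory Defs
  imports Main
begin

definition simple_graph :: "'a set \<Rightarrow> 'a set set \<Rightarrow> bool" where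
  "simple_graph V E \<longleftrightarrow> finite V \<and> (\<forall>e\<in>E. e \<subseteq> V \<and> card e = 2)"

definition labeling :: "'a set set \<Rightarrow> ('a set \<Rightarrow> int) \<Rightarrow> bool" where
  "labeling E f \<longleftrightarrow> (\<forall>e\<in>E. f e = -1 \<or> f e = 1)"

definition vlabel :: "'a set set \<Rightarrow> ('a set \<Rightarrow> int) \<Rightarrow> 'a \<Rightarrow> int" where
  "vlabel E f v = (\<Sum>e\<in>{e\<in>E. v \<in> e}. f e)"

definition e_count :: "'a set set \<Rightarrow> ('a set \<Rightarrow> int) \<Rightarrow> int \<Rightarrow> nat" where
  "e_count E f c = card {e\<in>E. f e = c}"

definition v_count :: "'a set \<Rightarrow> 'a set set \<Rightarrow> ('a set \<Rightarrow> int) \<Rightarrow> int \<Rightarrow> nat" where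
  "v_count V E f c = card {v\<in>V. vlabel E f v = c}"

definition H_cordial_labeling :: "'a set \<Rightarrow> 'a set set \<Rightarrow> ('a set \<Rightarrow> int) \<Rightarrow> bool" where
  "H_cordial_labeling V E f \<longleftrightarrow> labeling E f \<and>
     (\<exists>K::int. K > 0 \<and> (\<forall>v\<in>V. \<bar>vlabel E f v\<bar> = K) \<and>
        \<bar>int (e_count E f 1) - int (e_count E f (-1))\<bar> \<le> 1 \<and>
        \<bar>int (v_count V E f K) - int (v_count V E f (-K))\<bar> \<le> 1)"

definition H_cordial :: "'a set \<Rightarrow> 'a set set \<Rightarrow> bool" where
  "H_cordial V E \<longleftrightarrow> (\<exists>f. H_cordial_labeling V E f)"

end

theory Submission
  imports Defs
begin

lemma handshake:
  assumes "simple_graph V E"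
  shows "(\<Sum>v\<in>V. vlabel E f v) = 2 * (\<Sum>e\<in>E. f e)"
proof -
  have fV: "finite V" using assms by (simp add: simple_graph_def)
  have sub: "\<And>e. e \<in> E \<Longrightarrow> e \<subseteq> V \<and> card e = 2" using assms by (simp add: simple_graph_def)
  have fE: "finite E"
    by (rule finite_subset[of E "Pow V"]) (use sub fV in auto)
  have "(\<Sum>v\<in>V. vlabel E f v) = (\<Sum>v\<in>V. \<Sum>e\<in>E. if v \<in> e then f e else 0)"
    unfolding vlabel_def by (simp add: sum.inter_filter[OF fE])
  also have "\<dots> = (\<Sum>e\<in>E. \<Sum>v\<in>V. if v \<in> e then f e else 0)"
    by (rule sum.swap)
  also have "\<dots> = (\<Sum>e\<in>E. 2 * f e)"
  proof (rule sum.cong[OF refl])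
    fix e assume "e \<in> E"
    hence "e \<subseteq> V" "card e = 2" using sub by auto
    have "(\<Sum>v\<in>V. if v \<in> e then f e else 0) = (\<Sum>v\<in>{v\<in>V. v \<in> e}. f e)"
      by (rule sum.inter_filter[OF fV, symmetric])
    also have "{v\<in>V. v \<in> e} = e" using \<open>e \<subseteq> V\<close> by auto
    finally show "(\<Sum>v\<in>V. if v \<in> e then f e else 0) = 2 * f e" using \<open>card e = 2\<close> by simp
  qed
  finally show ?thesis by (simp add: sum_distrib_left)
qed

lemma split_sum:
  assumes "finite A" "\<forall>x\<in>A. g x = c \<or> g x = - c" "c \<noteq> (0::int)"
  shows "(\<Sum>x\<in>A. g x) = c * int (card {x\<in>A. g x = c}) - c * int (card {x\<in>A. g x = - c})"
    and "card A = card {x\<in>A. g x = c} + card {x\<in>A. g x = - c}"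
proof -
  have A: "A = {x\<in>A. g x = c} \<union> {x\<in>A. g x = - c}" using assms(2) by auto
  have d: "{x\<in>A. g x = c} \<inter> {x\<in>A. g x = - c} = {}" using assms(3) by auto
  have "(\<Sum>x\<in>A. g x) = (\<Sum>x\<in>{x\<in>A. g x = c}. g x) + (\<Sum>x\<in>{x\<in>A. g x = - c}. g x)"
    by (subst A, rule sum.union_disjoint) (use assms(1) d in auto)
  also have "\<dots> = (\<Sum>x\<in>{x\<in>A. g x = c}. c) + (\<Sum>x\<in>{x\<in>A. g x = - c}. - c)"
    by (intro arg_cong2[where f="(+)"] sum.cong) auto
  finally show "(\<Sum>x\<in>A. g x) = c * int (card {x\<in>A. g x = c}) - c * int (card {x\<in>A. g x = - c})"
    by (simp add: algebra_simps)
  show "card A = card {x\<in>A. g x = c} + card {x\<in>A. g x = - c}"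
    by (subst A, rule card_Un_disjoint) (use assms(1) d in auto)
qed

theorem lemma2:
  fixes V :: "'a set" and E :: "'a set set"
  assumes "simple_graph V E"
    and "H_cordial V E"
  shows "even (int (card E) - int (card V))"
proof -
  have fV: "finite V" using assms by (simp add: simple_graph_def)
  have fE: "finite E"
    by (rule finite_subset[of E "Pow V"]) (use assms(1) fV in \<open>auto simp: simple_graph_def\<close>)
  obtain f K where lab: "labeling E f" and K: "K > 0" "\<forall>v\<in>V. \<bar>vlabel E f v\<bar> = K"
    and ec: "\<bar>int (e_count E f 1) - int (e_count E f (-1))\<bar> \<le> 1"
    and vc: "\<bar>int (v_count V E f K) - int (v_count V E f (-K))\<bar> \<le> 1"
    using assms(2) unfolding H_cordial_def H_cordial_labeling_def by blast
  have l1: "\<forall>e\<in>E. f e = 1 \<or> f e = - 1" using lab by (auto simp: labeling_def)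
  have l2: "\<forall>v\<in>V. vlabel E f v = K \<or> vlabel E f v = - K" using K by auto
  note s1 = split_sum[OF fE l1, simplified]
  note s2 = split_sum[OF fV l2] 
  define p where "p = int (e_count E f 1)"
  define q where "q = int (e_count E f (-1))"
  define a where "a = int (v_count V E f K)"
  define b where "b = int (v_count V E f (-K))"
  have m: "int (card E) = p + q" using s1(2) unfolding p_def q_def e_count_def by simp
  have n: "int (card V) = a + b" using s2(2) K(1) unfolding a_def b_def v_count_def by simp
  have hs: "K * (a - b) = 2 * (p - q)"
    using handshake[OF assms(1), of f] s1(1) s2(1) K(1)
    unfolding p_def q_def a_def b_def e_count_def v_count_def by (simp add: algebra_simps)
  have "\<bar>a - b\<bar> \<le> 1" "\<bar>p - q\<bar> \<le> 1" using ec vc unfolding p_def q_def a_def b_def by auto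
  moreover have "a - b = 0 \<longleftrightarrow> p - q = 0" using hs K(1) by auto
  ultimately have "(p - q) - (a - b) \<in> {-2, 0, 2}" by (auto simp: abs_le_iff)
  hence "even ((p + q) - (a + b))"
  proof -
    assume h: "(p - q) - (a - b) \<in> {-2, 0, 2}"
    have "(p + q) - (a + b) = ((p - q) - (a - b)) + 2 * (q - b)" by simp
    moreover have "even ((p - q) - (a - b))"
    proof -
      from h have "(p - q) - (a - b) = 2 * (-1) \<or> (p - q) - (a - b) = 2 * 0 \<or> (p - q) - (a - b) = 2 * 1" by simp
      thus ?thesis by (metis dvd_triv_left)
    qed
    ultimately show ?thesis by (metis dvd_add dvd_triv_left)
  qed
  thus ?thesis using m n by simp
qed

end
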